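(* Let $P$ be a poset which admits a strictly isotone map $g:P\to P\uparrow x=\{y\in P\mid y\ge x\}$ for some non-minimal element $x\in P$. Then there exists no strictly isotone map $f:\mathrm{id}(P)\to P$. In particular, if $P$ is the lattice of all subsets of an infinite set, or the lattice of all equivalence relations on an infinite set, there is no strictly isotone map $\mathrm{id}(P)\to P$.
   Context: For a poset $P$, an ideal of $P$ is an upward directed downset of $P$ (a downset $d$ satisfies $x\le y\in d\Rightarrow x\in d$; upward directed means every two elements of the set have a common upper bound in the set). $\mathrm{id}(P)$ denotes the set of nonempty ideals of $P$, ordered by inclusion. A map $f:P\to Q$ of posets is strictly isotone if $x<y$ implies $f(x)<f(y)$. *)

theory Defs
  imports Main
begin

text \<open>A poset is represented as a carrier set P of a type with a partial order.\<close>

definition downset_in :: "'a::order set \<Rightarrow> 'a set \<Rightarrow> bool" where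
  "downset_in P d \<longleftrightarrow> d \<subseteq> P \<and> (\<forall>x\<in>P. \<forall>y\<in>d. x \<le> y \<longrightarrow> x \<in> d)"

definition up_directed :: "'a::order set \<Rightarrow> bool" where
  "up_directed d \<longleftrightarrow> (\<forall>x\<in>d. \<forall>y\<in>d. \<exists>z\<in>d. x \<le> z \<and> y \<le> z)"

definition is_ideal :: "'a::order set \<Rightarrow> 'a set \<Rightarrow> bool" where
  "is_ideal P d \<longleftrightarrow> downset_in P d \<and> up_directed d"

text \<open>id(P): the set of nonempty ideals of P, ordered by inclusion (the order on sets).\<close>
definition ideals :: "'a::order set \<Rightarrow> 'a set set" where
  "ideals P = {d. d \<noteq> {} \<and> is_ideal P d}"

definition strictly_isotone :: "'a::order set \<Rightarrow> 'b::order set \<Rightarrow> ('a \<Rightarrow> 'b) \<Rightarrow> bool" where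
  "strictly_isotone A B f \<longleftrightarrow> (\<forall>x\<in>A. f x \<in> B) \<and> strict_mono_on A f"

definition up_set :: "'a::order set \<Rightarrow> 'a \<Rightarrow> 'a set" where
  "up_set P x = {y\<in>P. y \<ge> x}"

end

theory Submission
  imports Defs
begin


definition dc :: "'a::order set \<Rightarrow> 'a set \<Rightarrow> 'a set" where
  "dc P C = {p\<in>P. \<exists>c\<in>C. p \<le> c}"

lemma dc_ideal:
  assumes "C \<subseteq> P" "C \<noteq> {}" "\<forall>a\<in>C. \<forall>b\<in>C. a \<le> b \<or> b \<le> a"
  shows "dc P C \<in> ideals P"
proof -
  have ne: "dc P C \<noteq> {}" using assms(1,2) unfolding dc_def by blast
  have ds: "downset_in P (dc P C)" unfolding downset_in_def dc_def using order_trans by blast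
  have ud: "up_directed (dc P C)" unfolding up_directed_def
  proof (intro ballI)
    fix p q assume p: "p \<in> dc P C" and q: "q \<in> dc P C"
    then obtain c d where "c\<in>C" "d\<in>C" "p \<le> c" "q \<le> d" unfolding dc_def by blast
    then show "\<exists>z\<in>dc P C. p \<le> z \<and> q \<le> z" using assms(1,3) unfolding dc_def
      by (metis (mono_tags, lifting) mem_Collect_eq order_refl order_trans subsetD)
  qed
  show ?thesis using ne ds ud unfolding ideals_def is_ideal_def by blast
qed

definition good :: "'a::order set \<Rightarrow> ('a set \<Rightarrow> 'a) \<Rightarrow> 'a \<Rightarrow> 'a set \<Rightarrow> bool" where
  "good P h y C \<longleftrightarrow> C \<subseteq> P \<and> y \<in> C \<and> (\<forall>a\<in>C. \<forall>b\<in>C. a \<le> b \<or> b \<le> a) \<and> (\<forall>c\<in>C. y \<le> c)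
     \<and> (\<forall>c\<in>C. c \<noteq> y \<longrightarrow> c = h (dc P {z\<in>C. z < c}))"

definition prec :: "'a::order set \<Rightarrow> 'a set \<Rightarrow> bool" where
  "prec C D \<longleftrightarrow> C \<subseteq> D \<and> (\<forall>d\<in>D-C. \<forall>c\<in>C. c < d)"

lemma main:
  fixes P :: "'a::order set" and h :: "'a set \<Rightarrow> 'a"
  assumes yP: "y \<in> P" and hm: "strict_mono_on (ideals P) h"
    and hP: "\<forall>d\<in>ideals P. h d \<in> P \<and> y < h d"
  shows False
proof -
  let ?G = "{C. good P h y C}"
  have key: "c < h (dc P C)" if g: "good P h y C" and c: "c \<in> C" for C c
  proof -
    have I: "dc P C \<in> ideals P" using g unfolding good_def by (intro dc_ideal) auto
    show ?thesis
    proof (cases "c = y")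
      case True then show ?thesis using hP I by auto
    next
      case False
      let ?S = "{z\<in>C. z < c}"
      have yc: "y < c" using g c False unfolding good_def by auto
      have I2: "dc P ?S \<in> ideals P" using g yc c unfolding good_def by (intro dc_ideal) auto
      have sub: "dc P ?S \<subset> dc P C"
      proof
        show "dc P ?S \<subseteq> dc P C" unfolding dc_def by auto
        have "c \<in> dc P C" using g c unfolding good_def dc_def by auto
        moreover have "c \<notin> dc P ?S" unfolding dc_def by auto
        ultimately show "dc P ?S \<noteq> dc P C" by blast
      qed
      have "h (dc P ?S) < h (dc P C)" using hm I I2 sub by (meson strict_mono_onD)
      moreover have "c = h (dc P ?S)" using g c False unfolding good_def by auto
      ultimately show ?thesis by simp
    qed
  qed
  have ext: "good P h y (insert (h (dc P C)) C)" if g: "good P h y C" for C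
  proof -
    let ?q = "h (dc P C)"
    have I: "dc P C \<in> ideals P" using g unfolding good_def by (intro dc_ideal) auto
    have qP: "?q \<in> P" "y < ?q" using hP I by auto
    have lt: "\<forall>c\<in>C. c < ?q" using key g by blast
    have e1: "{z\<in>insert ?q C. z < ?q} = C" using lt by auto
    have e2: "{z\<in>insert ?q C. z < c} = {z\<in>C. z < c}" if "c \<in> C" for c
      using lt that by auto
    show ?thesis using g qP lt e1 e2 unfolding good_def
      by (auto simp: less_imp_le)
  qed
  have goody: "good P h y {y}" using yP unfolding good_def by auto
  have po: "partial_order_on ?G (relation_of prec ?G)"
    unfolding partial_order_on_def preorder_on_def refl_on_def trans_on_def antisym_on_def relation_of_def prec_def
    by (auto, blast+)
  have "\<exists>m \<in> ?G. \<forall>a \<in> ?G. prec m a \<longrightarrow> a = m"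
  proof (rule predicate_Zorn[OF po])
    fix \<C> assume ch: "\<C> \<in> Chains (relation_of prec ?G)"
    show "\<exists>u\<in>?G. \<forall>a\<in>\<C>. prec a u"
    proof (cases "\<C> = {}")
      case True then show ?thesis using goody by auto
    next
      case False
      have memG: "\<And>C. C \<in> \<C> \<Longrightarrow> good P h y C" using ch unfolding Chains_def relation_of_def by auto
      have cmp: "\<And>C D. C \<in> \<C> \<Longrightarrow> D \<in> \<C> \<Longrightarrow> prec C D \<or> prec D C"
        using ch unfolding Chains_def relation_of_def by auto
      let ?U = "\<Union>\<C>"
      have seg: "{z\<in>?U. z < c} = {z\<in>C. z < c}" if "C \<in> \<C>" "c \<in> C" for C c
      proof -
        have "z \<in> C" if "z \<in> D" "D \<in> \<C>" "z < c" for z D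
          using cmp[OF \<open>C \<in> \<C>\<close> that(2)] that \<open>c \<in> C\<close> unfolding prec_def
          by (metis Diff_iff less_asym subsetD)
        then show ?thesis using that by auto
      qed
      have comp: "a \<le> b \<or> b \<le> a" if "a \<in> ?U" "b \<in> ?U" for a b
      proof -
        obtain C D where CD: "C \<in> \<C>" "D \<in> \<C>" "a \<in> C" "b \<in> D" using \<open>a \<in> ?U\<close> \<open>b \<in> ?U\<close> by blast
        then have "(a \<in> D \<and> b \<in> D) \<or> (a \<in> C \<and> b \<in> C)" using cmp[OF CD(1,2)] unfolding prec_def by blast
        then show ?thesis using memG CD unfolding good_def by blast
      qed
      have gU: "good P h y ?U"
        unfolding good_def
      proof (intro conjI ballI impI)
        show "?U \<subseteq> P" using memG unfolding good_def by blast
        show "y \<in> ?U" using memG False unfolding good_def by blast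
        show "\<And>a b. a \<in> ?U \<Longrightarrow> b \<in> ?U \<Longrightarrow> a \<le> b \<or> b \<le> a" using comp by blast
        show "\<And>c. c \<in> ?U \<Longrightarrow> y \<le> c" using memG unfolding good_def by blast
        fix c assume c: "c \<in> ?U" "c \<noteq> y"
        then obtain C where C: "C \<in> \<C>" "c \<in> C" by auto
        then show "c = h (dc P {z\<in>?U. z < c})" using seg[OF C] memG[OF C(1)] c(2) unfolding good_def by auto
      qed
      have "prec C ?U" if "C \<in> \<C>" for C
        unfolding prec_def
      proof (intro conjI ballI)
        show "C \<subseteq> ?U" using that by auto
        fix d c assume d: "d \<in> ?U - C" and c: "c \<in> C"
        then obtain D where D: "D \<in> \<C>" "d \<in> D" by auto
        have "prec C D" using cmp[OF that D(1)] d D unfolding prec_def by auto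
        then show "c < d" using d D c unfolding prec_def by auto
      qed
      then show ?thesis using gU by auto
    qed
  qed
  then obtain M where M: "good P h y M" and mx: "\<forall>a \<in> ?G. prec M a \<longrightarrow> a = M" by auto
  let ?q = "h (dc P M)"
  have lt: "\<forall>c\<in>M. c < ?q" using key M by blast
  have "prec M (insert ?q M)" using lt unfolding prec_def by auto
  then have "insert ?q M = M" using mx ext[OF M] by auto
  then show False using lt by auto
qed

lemma part1:
  fixes P :: "'a::order set"
  assumes "x \<in> P" "y \<in> P" "y < x" "strictly_isotone P (up_set P x) g"
    "strictly_isotone (ideals P) P f"
  shows False
proof (rule main[of y P "g \<circ> f"])
  show "y \<in> P" by fact
  have gx: "\<And>p. p \<in> P \<Longrightarrow> g p \<in> P \<and> x \<le> g p" using assms(4) unfolding strictly_isotone_def up_set_def by auto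
  show "\<forall>d\<in>ideals P. (g \<circ> f) d \<in> P \<and> y < (g \<circ> f) d"
    using assms(5) gx assms(3) unfolding strictly_isotone_def by (auto intro: less_le_trans)
  show "strict_mono_on (ideals P) (g \<circ> f)"
    using assms(4,5) unfolding strictly_isotone_def
    by (auto intro!: strict_mono_onI dest: strict_mono_onD)
qed

lemma inf_inj:
  assumes "infinite A"
  shows "\<exists>a b e. a \<in> A \<and> b \<in> A \<and> a \<noteq> b \<and> inj_on e A \<and> e ` A \<subseteq> A - {a, b}"
proof -
  obtain s :: "nat \<Rightarrow> _" where s: "inj s" "range s \<subseteq> A" using infinite_countable_subset[OF assms] by blast
  define e where "e u = (if u \<in> range s then s (Suc (Suc (inv s u))) else u)" for u
  have es: "e (s n) = s (Suc (Suc n))" for n unfolding e_def using s(1) by (simp add: inv_f_f)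
  have en: "u \<notin> range s \<Longrightarrow> e u = u" for u unfolding e_def by simp
  have sA: "s n \<in> A" for n using s(2) by blast
  have sinj: "s m = s n \<longleftrightarrow> m = n" for m n using s(1) by (simp add: inj_eq)
  have "inj_on e A"
  proof (rule inj_onI)
    fix u v assume "u \<in> A" "v \<in> A" and euv: "e u = e v"
    show "u = v"
    proof (cases "u \<in> range s"; cases "v \<in> range s")
      assume "u \<in> range s" "v \<in> range s"
      then obtain m n where "u = s m" "v = s n" by blast
      then show ?thesis using euv es sinj by simp
    next
      assume a: "u \<in> range s" "v \<notin> range s"
      then obtain m where "u = s m" by blast
      then have "e u \<in> range s" using es by simp
      then show ?thesis using euv en a by simp
    next
      assume a: "u \<notin> range s" "v \<in> range s"
      then obtain m where "v = s m" by blast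
      then have "e v \<in> range s" using es by simp
      then show ?thesis using euv en a by simp
    next
      assume "u \<notin> range s" "v \<notin> range s"
      then show ?thesis using euv en by simp
    qed
  qed
  moreover have "e ` A \<subseteq> A - {s 0, s 1}"
  proof
    fix w assume "w \<in> e ` A"
    then obtain u where u: "u \<in> A" "w = e u" by blast
    show "w \<in> A - {s 0, s 1}"
    proof (cases "u \<in> range s")
      case True then obtain n where "u = s n" by blast
      then show ?thesis using u es sA sinj by simp
    next
      case False
      have "s 0 \<in> range s" "s 1 \<in> range s" by auto
      then show ?thesis using u en False by auto
    qed
  qed
  moreover have "s 0 \<noteq> s 1" using sinj by simp
  ultimately show ?thesis using sA by blast
qed

lemma part2:
  assumes "infinite A" "strictly_isotone (ideals (Pow A)) (Pow A) f"
  shows False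
proof -
  obtain a b e where abe: "a \<in> A" "b \<in> A" "a \<noteq> b" "inj_on e A" "e ` A \<subseteq> A - {a, b}"
    using inf_inj[OF assms(1)] by blast
  define g where "g S = insert a (e ` S)" for S
  have "strictly_isotone (Pow A) (up_set (Pow A) {a}) g"
    unfolding strictly_isotone_def up_set_def
  proof (intro conjI ballI strict_mono_onI)
    fix S assume "S \<in> Pow A" then show "g S \<in> {y \<in> Pow A. {a} \<le> y}" using abe unfolding g_def by auto
  next
    fix S T assume ST: "S \<in> Pow A" "T \<in> Pow A" "S < T"
    then obtain t where t: "t \<in> T" "t \<notin> S" by blast
    have "e t \<notin> e ` S" using t ST abe(4) by (auto simp: inj_on_def)
    moreover have "e t \<noteq> a" using t ST abe(5) by auto
    ultimately show "g S < g T" using t ST unfolding g_def by auto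
  qed
  then show False using part1[of "{a}" "Pow A" "{}" g f] abe assms(2) by auto
qed


lemma part3:
  fixes A :: "'c set"
  assumes "infinite A" "strictly_isotone (ideals {r. equiv A r}) {r. equiv A r} f"
  shows False
proof -
  obtain a b e where abe: "a \<in> A" "b \<in> A" "a \<noteq> b" "inj_on e A" "e ` A \<subseteq> A - {a, b}"
    using inf_inj[OF assms(1)] by blast
  define x where "x = Id_on A \<union> {(a,b),(b,a)}"
  define g where "g r = (map_prod e e ` r) \<union> x" for r
  have ex: "equiv A x" unfolding x_def equiv_def refl_on_def sym_def trans_def using abe by auto
  have eg: "equiv A (g r)" if r: "equiv A r" for r
  proof -
    have rA: "r \<subseteq> A \<times> A" using r by (simp add: equiv_def refl_on_def)
    have reflr: "\<And>u. u \<in> A \<Longrightarrow> (u,u) \<in> r" using r by (simp add: equiv_def refl_on_def)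
    have symr: "\<And>u v. (u,v) \<in> r \<Longrightarrow> (v,u) \<in> r" using r by (meson equiv_def symD)
    have transr: "\<And>u v w. (u,v) \<in> r \<Longrightarrow> (v,w) \<in> r \<Longrightarrow> (u,w) \<in> r" using r by (meson equiv_def transD)
    have eA: "\<And>u. u \<in> A \<Longrightarrow> e u \<in> A \<and> e u \<noteq> a \<and> e u \<noteq> b" using abe(5) by auto
    have inj: "\<And>u v. u \<in> A \<Longrightarrow> v \<in> A \<Longrightarrow> e u = e v \<Longrightarrow> u = v" using abe(4) by (auto simp: inj_on_def)
    show ?thesis
      unfolding equiv_def refl_on_def sym_def trans_def g_def x_def
    proof (intro conjI allI impI)
      show "map_prod e e ` r \<union> (Id_on A \<union> {(a, b), (b, a)}) \<subseteq> A \<times> A"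
        using rA eA abe by auto
      show "\<forall>x\<in>A. (x, x) \<in> map_prod e e ` r \<union> (Id_on A \<union> {(a, b), (b, a)})" by auto
      show "\<And>u v. (u, v) \<in> map_prod e e ` r \<union> (Id_on A \<union> {(a, b), (b, a)}) \<Longrightarrow>
             (v, u) \<in> map_prod e e ` r \<union> (Id_on A \<union> {(a, b), (b, a)})"
        using symr by auto
      fix u v w
      assume 1: "(u, v) \<in> map_prod e e ` r \<union> (Id_on A \<union> {(a, b), (b, a)})"
        and 2: "(v, w) \<in> map_prod e e ` r \<union> (Id_on A \<union> {(a, b), (b, a)})"
      show "(u, w) \<in> map_prod e e ` r \<union> (Id_on A \<union> {(a, b), (b, a)})"
        using 1 2
      proof (elim UnE)
        assume "(u,v) \<in> map_prod e e ` r" "(v,w) \<in> map_prod e e ` r"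
        then obtain u' v' v'' w' where "(u',v') \<in> r" "(v'',w') \<in> r" "u = e u'" "v = e v'" "v = e v''" "w = e w'"
          by auto
        moreover then have "v' = v''" using inj rA by blast
        ultimately show ?thesis using transr by auto
      qed (use rA eA abe in auto)
    qed
  qed
  have "strictly_isotone {r. equiv A r} (up_set {r. equiv A r} x) g"
    unfolding strictly_isotone_def up_set_def
  proof (intro conjI ballI strict_mono_onI)
    fix r assume "r \<in> {r. equiv A r}" then show "g r \<in> {y \<in> {r. equiv A r}. x \<le> y}"
      using eg unfolding g_def by auto
  next
    fix r s assume rs: "r \<in> {r. equiv A r}" "s \<in> {r. equiv A r}" "r < s"
    from rs(3) obtain p where p: "p \<in> s" "p \<notin> r" by (meson psubset_imp_ex_mem DiffE)
    obtain u v where "p = (u,v)" by fastforce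
    with p have uv: "(u,v) \<in> s" "(u,v) \<notin> r" by auto
    have sA: "s \<subseteq> A \<times> A" using rs by (simp add: equiv_def refl_on_def)
    have rA: "r \<subseteq> A \<times> A" using rs by (simp add: equiv_def refl_on_def)
    have uvA: "u \<in> A" "v \<in> A" using uv sA by auto
    have uvne: "u \<noteq> v" using uv uvA rs by (auto simp: equiv_def refl_on_def)
    have n1: "(e u, e v) \<notin> map_prod e e ` r"
    proof
      assume "(e u, e v) \<in> map_prod e e ` r"
      then obtain u' v' where "(u',v') \<in> r" "e u = e u'" "e v = e v'" by auto
      then show False using abe(4) rA uvA uv unfolding inj_on_def by blast
    qed
    have n2: "(e u, e v) \<notin> x" unfolding x_def using abe(4,5) uvA uvne unfolding inj_on_def by auto
    have "(e u, e v) \<in> g s" unfolding g_def using uv by auto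
    moreover have "(e u, e v) \<notin> g r" unfolding g_def using n1 n2 by auto
    moreover have "g r \<subseteq> g s" unfolding g_def using rs by auto
    ultimately show "g r < g s" by blast
  qed
  moreover have "Id_on A \<in> {r. equiv A r}" by (auto simp: equiv_def refl_on_def sym_def trans_def)
  moreover have "Id_on A < x" unfolding x_def using abe by auto
  ultimately show False using part1[of x "{r. equiv A r}" "Id_on A" g f] ex assms(2) by auto
qed


theorem corollary2p3:
  shows "(\<forall>(P::'a::order set) x g. x \<in> P \<and> (\<exists>y\<in>P. y < x) \<and> strictly_isotone P (up_set P x) g
            \<longrightarrow> \<not> (\<exists>f. strictly_isotone (ideals P) P f))
       \<and> (\<forall>A::'b set. infinite A \<longrightarrow> \<not> (\<exists>f. strictly_isotone (ideals (Pow A)) (Pow A) f))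
       \<and> (\<forall>A::'c set. infinite A \<longrightarrow>
            \<not> (\<exists>f. strictly_isotone (ideals {r. equiv A r}) {r. equiv A r} f))"
proof (intro conjI allI impI notI)
  fix P :: "'a::order set" and x g
  assume a: "x \<in> P \<and> (\<exists>y\<in>P. y < x) \<and> strictly_isotone P (up_set P x) g"
    and b: "\<exists>f. strictly_isotone (ideals P) P f"
  from a obtain y where "y \<in> P" "y < x" by blast
  moreover from b obtain f where "strictly_isotone (ideals P) P f" by blast
  ultimately show False using a part1[of x P y g f] by blast
next
  fix A :: "'b set" assume "infinite A" "\<exists>f. strictly_isotone (ideals (Pow A)) (Pow A) f"
  then show False using part2 by blast
next
  fix A :: "'c set" assume "infinite A" "\<exists>f. strictly_isotone (ideals {r. equiv A r}) {r. equiv A r} f"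
  then show False using part3 by blast
qed

end
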